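(* Let $T$ be a finite tree rooted at a vertex $r$, and let $\omega: V(T)\to [0,\infty)$ be a nonnegative weight function with $\omega(T)=\sum_{v\in V(T)}\omega(v)=1$. Then at least one of the following holds: (i) there is a vertex $u\in V(T)$ such that the unique $(r,u)$-path $P$ in $T$ satisfies $\omega(P)\ge \frac13$; (ii) there exist unrelated sets $A,B\subseteq V(T)$ with $\omega(A)\ge\frac13$ and $\omega(B)\ge\frac13$. Moreover, the constant $\frac13$ is best possible: for every real $c>\frac13$ there exist a finite tree $T$ rooted at $r$ and a nonnegative weight function $\omega$ on $V(T)$ with $\omega(T)=1$ such that every $(r,u)$-path $P$ ($u\in V(T)$) has $\omega(P)<c$ and every pair of unrelated sets $A,B\subseteq V(T)$ has $\min\{\omega(A),\omega(B)\}<c$.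
   Context: Let $T$ be a tree rooted at $r$. A vertex $y$ is a descendant of a vertex $x$ if $x$ lies on the unique $(r,y)$-path in $T$ (so every vertex is a descendant of itself). Two vertices of $T$ are related if one is a descendant of the other; otherwise they are unrelated. Two subsets $A,B\subseteq V(T)$ are unrelated if every $a\in A$ and every $b\in B$ are unrelated (in particular $A\cap B=\emptyset$). For $S\subseteq V(T)$, $\omega(S)=\sum_{s\in S}\omega(s)$, and for a subgraph $H$ of $T$, $\omega(H)=\omega(V(H))$. *)

theory Defs
  imports Complex_Main
begin

text \<open>A finite rooted tree is represented by its finite vertex set V, its root r and
  a parent function: the parent of the root is the root itself, every other vertex has
  its parent in V, and iterating the parent map from any vertex reaches the root.
  (The tree edges are the pairs {v, parent v} for v in V - {r}.)\<close>
definition rooted_tree :: "'a set \<Rightarrow> 'a \<Rightarrow> ('a \<Rightarrow> 'a) \<Rightarrow> bool" where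
  "rooted_tree V r par \<longleftrightarrow> finite V \<and> r \<in> V \<and> par r = r \<and>
     (\<forall>v\<in>V. par v \<in> V) \<and> (\<forall>v\<in>V. \<exists>n. (par ^^ n) v = r)"

text \<open>y is a descendant of x: x lies on the unique (r,y)-path, i.e. x is reached from y
  by going upwards (every vertex is a descendant of itself).\<close>
definition descendant :: "'a set \<Rightarrow> ('a \<Rightarrow> 'a) \<Rightarrow> 'a \<Rightarrow> 'a \<Rightarrow> bool" where
  "descendant V par y x \<longleftrightarrow> x \<in> V \<and> y \<in> V \<and> (\<exists>n. (par ^^ n) y = x)"

definition related :: "'a set \<Rightarrow> ('a \<Rightarrow> 'a) \<Rightarrow> 'a \<Rightarrow> 'a \<Rightarrow> bool" where
  "related V par x y \<longleftrightarrow> descendant V par x y \<or> descendant V par y x"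

definition unrelated_sets :: "'a set \<Rightarrow> ('a \<Rightarrow> 'a) \<Rightarrow> 'a set \<Rightarrow> 'a set \<Rightarrow> bool" where
  "unrelated_sets V par A B \<longleftrightarrow> (\<forall>a\<in>A. \<forall>b\<in>B. \<not> related V par a b)"

definition root_path :: "'a set \<Rightarrow> ('a \<Rightarrow> 'a) \<Rightarrow> 'a \<Rightarrow> 'a set" where
  "root_path V par u = {x \<in> V. descendant V par u x}"

definition weighting :: "'a set \<Rightarrow> ('a \<Rightarrow> real) \<Rightarrow> bool" where
  "weighting V w \<longleftrightarrow> (\<forall>v\<in>V. w v \<ge> 0) \<and> sum w V = 1"

end

theory Submission
  imports Defs
begin

lemma iter_in: "\<forall>v\<in>V. par v \<in> V \<Longrightarrow> x \<in> V \<Longrightarrow> (par^^n) x \<in> V"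
  by (induction n) auto

lemma iter_r: "par r = r \<Longrightarrow> (par^^n) r = r"
  by (induction n) auto

lemma iter_add: "(f^^(m+n)) x = (f^^m) ((f^^n) x)"
  by (simp add: funpow_add)

lemma closed_iter: "\<forall>x\<in>X. par x \<in> X \<Longrightarrow> x \<in> X \<Longrightarrow> (par^^n) x \<in> X"
  by (induction n) auto

lemma cyc:
  assumes T: "rooted_tree V r par" and x: "x \<in> V" and c: "(par^^(Suc p)) x = x"
  shows "x = r"
proof -
  have per: "(par^^(i * Suc p)) x = x" for i
  proof (induction i)
    case (Suc i)
    have "(par^^(Suc i * Suc p)) x = (par^^(Suc p + i * Suc p)) x" by (simp only: mult_Suc)
    also have "\<dots> = (par^^(Suc p)) ((par^^(i * Suc p)) x)" by (rule iter_add)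
    also have "\<dots> = x" using Suc.IH c by simp
    finally show ?case .
  qed simp
  obtain n where n: "(par^^n) x = r" using T x unfolding rooted_tree_def by blast
  have "n * Suc p = (n * Suc p - n) + n" by simp
  then have "(par^^(n * Suc p)) x = (par^^((n * Suc p - n) + n)) x"
    by (rule arg_cong[where f="\<lambda>k. (par^^k) x"])
  also have "\<dots> = (par^^(n * Suc p - n)) ((par^^n) x)" by (rule iter_add)
  also have "\<dots> = r" using n iter_r[of par r] T unfolding rooted_tree_def by simp
  finally show ?thesis using per by simp
qed

definition bd :: "'a set \<Rightarrow> ('a \<Rightarrow> 'a) \<Rightarrow> 'a set \<Rightarrow> 'a set" where
  "bd V par X = {x \<in> X. \<exists>y\<in>V - X. \<exists>n. (par^^n) y = x}"

definition good :: "'a set \<Rightarrow> ('a \<Rightarrow> 'a) \<Rightarrow> 'a set \<Rightarrow> bool" where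
  "good V par X \<longleftrightarrow> X \<subseteq> V \<and> (\<forall>x\<in>X. par x \<in> X) \<and>
     (X = {} \<or> (\<exists>u\<in>X. \<forall>x\<in>bd V par X. \<exists>n. (par^^n) u = x))"

lemma ext:
  assumes T: "rooted_tree V r par" and G: "good V par X" and ne: "X \<noteq> V"
  shows "\<exists>v\<in>V. v \<notin> X \<and> par v \<in> insert v X \<and> (\<forall>x\<in>bd V par X. \<exists>n. (par^^n) v = x)"
proof (cases "X = {}")
  case True
  then show ?thesis using T unfolding rooted_tree_def bd_def by auto
next
  case False
  have sub: "X \<subseteq> V" and cl: "\<forall>x\<in>X. par x \<in> X" using G unfolding good_def by auto
  obtain u where u: "u \<in> X" and hu: "\<forall>x\<in>bd V par X. \<exists>n. (par^^n) u = x"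
    using G False unfolding good_def by auto
  obtain y where y: "y \<in> V" "y \<notin> X" using sub ne by blast
  have pV: "\<forall>v\<in>V. par v \<in> V" using T unfolding rooted_tree_def by auto
  obtain n0 where n0: "(par^^n0) u = r" using T u sub unfolding rooted_tree_def by blast
  have rX: "r \<in> X" using closed_iter[OF cl u, of n0] n0 by simp
  obtain n1 where "(par^^n1) y = r" using T y unfolding rooted_tree_def by blast
  then have rbd: "r \<in> bd V par X" using rX y unfolding bd_def by blast
  then have ex: "\<exists>k. (par^^k) u \<in> bd V par X" using n0 by metis
  define k where "k = (LEAST k. (par^^k) u \<in> bd V par X)"
  have hk: "(par^^k) u \<in> bd V par X" unfolding k_def by (rule LeastI_ex[OF ex])
  have kmin: "\<And>j. (par^^j) u \<in> bd V par X \<Longrightarrow> k \<le> j" unfolding k_def by (rule Least_le)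
  define b where "b = (par^^k) u"
  have bX: "b \<in> X" using hk unfolding b_def bd_def by auto
  have bV: "b \<in> V" using bX sub by auto
  obtain y' m0 where y': "y' \<in> V" "y' \<notin> X" and m0: "(par^^m0) y' = b"
    using hk unfolding b_def bd_def by auto
  have exm: "\<exists>m. (par^^m) y' = b" using m0 by blast
  define m where "m = (LEAST m. (par^^m) y' = b)"
  have hm: "(par^^m) y' = b" unfolding m_def by (rule LeastI_ex[OF exm])
  have mmin: "\<And>j. (par^^j) y' = b \<Longrightarrow> m \<le> j" unfolding m_def by (rule Least_le)
  have m0': "m \<noteq> 0"
  proof
    assume "m = 0" then have "y' = b" using hm by simp
    then show False using y' bX by simp
  qed
  define v where "v = (par^^(m-1)) y'"
  have pv: "par v = b" using hm m0' unfolding v_def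
    by (metis Suc_pred' bot_nat_0.not_eq_extremum comp_apply funpow.simps(2))
  have vV: "v \<in> V" unfolding v_def using iter_in[OF pV y'(1)] .
  have path: "\<exists>n. (par^^n) v = x" if xb: "x \<in> bd V par X" for x
  proof -
    obtain j where j: "(par^^j) u = x" using hu xb by blast
    have kj: "k \<le> j" using kmin[of j] j xb by simp
    have e1: "(par^^j) u = (par^^(j-k)) ((par^^k) u)"
      using kj iter_add[where f=par and m="j-k" and n=k and x=u] by simp
    have e2: "(par^^(Suc (j-k))) v = (par^^(j-k)) (par v)"
      by (simp only: funpow_Suc_right comp_apply)
    have "(par^^(Suc (j-k))) v = x" using e2 pv e1 j unfolding b_def by simp
    then show ?thesis by blast
  qed
  have vnX: "v \<notin> X"
  proof
    assume vX: "v \<in> X"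
    have "v \<in> bd V par X" unfolding bd_def
      using vX y' v_def by auto
    then obtain j where j: "(par^^j) u = v" using hu by blast
    have kj: "k \<le> j" using kmin[of j] j \<open>v \<in> bd V par X\<close> by simp
    have "(par^^j) u = (par^^((j-k)+k)) u" using kj by simp
    also have "\<dots> = (par^^(j-k)) ((par^^k) u)" by (rule iter_add)
    finally have "(par^^j) u = (par^^(j-k)) ((par^^k) u)" .
    then have vb: "v = (par^^(j-k)) b" using j unfolding b_def by metis
    then have "(par^^(Suc (j-k))) b = b" using pv by simp
    then have "b = r" using cyc[OF T bV] by blast
    then have "v = b" using vb iter_r T unfolding rooted_tree_def by metis
    then have "(par^^(m-1)) y' = b" unfolding v_def .
    then have "m \<le> m - 1" using mmin by blast
    then show False using m0' by simp
  qed
  show ?thesis using vV vnX pv bX path by auto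
qed

lemma part1:
  assumes T: "rooted_tree V r par" and W: "weighting V w"
    and np: "\<forall>u\<in>V. sum w (root_path V par u) < 1/3"
  shows "\<exists>A B. A \<subseteq> V \<and> B \<subseteq> V \<and> unrelated_sets V par A B \<and>
                    sum w A \<ge> 1/3 \<and> sum w B \<ge> 1/3"
proof -
  have fin: "finite V" using T unfolding rooted_tree_def by auto
  have wpos: "\<forall>v\<in>V. w v \<ge> 0" and w1: "sum w V = 1" using W unfolding weighting_def by auto
  define G where "G = {X. good V par X \<and> sum w X \<le> 2/3}"
  have "G \<subseteq> Pow V" unfolding G_def good_def by auto
  then have finG: "finite G" using fin by (meson finite_Pow_iff finite_subset)
  have eG: "{} \<in> G" unfolding G_def good_def by simp
  have "Max (card ` G) \<in> card ` G" using finG eG by (intro Max_in) auto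
  then obtain X where XG: "X \<in> G" and Xc: "card X = Max (card ` G)" by auto
  have Xmax: "\<And>Y. Y \<in> G \<Longrightarrow> card Y \<le> card X" using Xc finG by simp
  have gX: "good V par X" and wX: "sum w X \<le> 2/3" using XG unfolding G_def by auto
  have sub: "X \<subseteq> V" and cl: "\<forall>x\<in>X. par x \<in> X" using gX unfolding good_def by auto
  have finX: "finite X" using sub fin finite_subset by auto
  have ne: "X \<noteq> V" using wX w1 by auto
  obtain v where vV: "v \<in> V" and vX: "v \<notin> X" and pv: "par v \<in> insert v X"
    and bdv: "\<forall>x\<in>bd V par X. \<exists>n. (par^^n) v = x"
    using ext[OF T gX ne] by blast
  have "good V par (insert v X)" unfolding good_def
  proof (intro conjI)
    show "insert v X \<subseteq> V" using sub vV by auto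
    show "\<forall>x\<in>insert v X. par x \<in> insert v X" using cl pv by auto
    show "insert v X = {} \<or> (\<exists>u\<in>insert v X. \<forall>x\<in>bd V par (insert v X). \<exists>n. (par^^n) u = x)"
    proof (rule disjI2, rule bexI[of _ v], intro ballI)
      fix x assume x: "x \<in> bd V par (insert v X)"
      show "\<exists>n. (par^^n) v = x"
      proof (cases "x = v")
        case True then show ?thesis by (intro exI[of _ 0]) simp
      next
        case False
        then have "x \<in> bd V par X" using x unfolding bd_def by auto
        then show ?thesis using bdv by blast
      qed
    qed simp
  qed
  moreover have "card (insert v X) > card X" using finX vX by simp
  ultimately have "insert v X \<notin> G" using Xmax[of "insert v X"] by linarith
  then have "\<not> sum w (insert v X) \<le> 2/3" using \<open>good V par (insert v X)\<close>
    unfolding G_def by blast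
  then have big: "w v + sum w X > 2/3" using finX vX by simp
  define P where "P = root_path V par v"
  have wP: "sum w P < 1/3" using np vV P_def by auto
  have finP: "finite P" unfolding P_def root_path_def using fin by auto
  have vP: "v \<in> P" unfolding P_def root_path_def descendant_def using vV
    by (auto intro: exI[of _ 0])
  have PV: "P \<subseteq> V" unfolding P_def root_path_def by auto
  define A where "A = X - P"
  define B where "B = V - X"
  have sA: "sum w X = sum w (X \<inter> P) + sum w A" unfolding A_def
    using finX by (rule sum.Int_Diff)
  have "sum w (X \<inter> P) \<le> sum w (P - {v})"
    using finP vX wpos PV by (intro sum_mono2) auto
  also have "\<dots> = sum w P - w v" using finP vP by (simp add: sum_diff1)
  finally have wA: "sum w A \<ge> 1/3" using sA big wP by linarith
  have wB: "sum w B = 1 - sum w X" unfolding B_def using fin sub w1 by (simp add: sum_diff)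
  have unrel: "unrelated_sets V par A B"
    unfolding unrelated_sets_def related_def
  proof (intro ballI notI)
    fix a b assume a: "a \<in> A" and b: "b \<in> B"
      and rel: "descendant V par a b \<or> descendant V par b a"
    show False using rel
    proof
      assume "descendant V par a b"
      then obtain n where "(par^^n) a = b" unfolding descendant_def by auto
      moreover have "a \<in> X" using a unfolding A_def by simp
      ultimately have "b \<in> X" using closed_iter[OF cl, of a n] by simp
      then show False using b unfolding B_def by auto
    next
      assume "descendant V par b a"
      then obtain n where "(par^^n) b = a" unfolding descendant_def by auto
      moreover have "a \<in> X" using a unfolding A_def by simp
      moreover have "b \<in> V - X" using b unfolding B_def by simp
      ultimately have "a \<in> bd V par X" unfolding bd_def by blast
      then obtain k where "(par^^k) v = a" using bdv by blast
      moreover have "a \<in> V" using \<open>a \<in> X\<close> sub by blast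
      ultimately have "a \<in> P" unfolding P_def root_path_def descendant_def using vV
        by blast
      then show False using a unfolding A_def by auto
    qed
  qed
  show ?thesis
    by (rule exI[of _ A], rule exI[of _ B]) (use unrel wA wB wX sub in \<open>auto simp: A_def B_def\<close>)
qed


lemma pw: "((\<lambda>_. 0::nat)^^n) i = (if n = 0 then i else 0)"
  by (induction n) auto

lemma desc0: "descendant {0,1,2,3} (\<lambda>_. 0::nat) y x \<longleftrightarrow>
   x \<in> {0,1,2,3} \<and> y \<in> {0,1,2,3} \<and> (x = y \<or> x = 0)"
proof
  assume "descendant {0,1,2,3} (\<lambda>_. 0::nat) y x"
  then show "x \<in> {0,1,2,3} \<and> y \<in> {0,1,2,3} \<and> (x = y \<or> x = 0)"
    unfolding descendant_def pw by (auto split: if_splits)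
next
  assume h: "x \<in> {0,1,2,3} \<and> y \<in> {0,1,2,3} \<and> (x = y \<or> x = 0)"
  show "descendant {0,1,2,3} (\<lambda>_. 0::nat) y x"
  proof (cases "x = y")
    case True then show ?thesis using h unfolding descendant_def
      by (intro conjI exI[of _ 0]) auto
  next
    case False then show ?thesis using h unfolding descendant_def
      by (intro conjI exI[of _ 1]) auto
  qed
qed

lemma part2:
  fixes c :: real assumes c: "c > 1/3"
  shows "\<exists>(V :: nat set) r par w. rooted_tree V r par \<and> weighting V w \<and>
               (\<forall>u\<in>V. sum w (root_path V par u) < c) \<and>
               (\<forall>A B. A \<subseteq> V \<and> B \<subseteq> V \<and> unrelated_sets V par A B \<longrightarrow>
                      min (sum w A) (sum w B) < c)"
proof -
  define V :: "nat set" where "V = {0,1,2,3}"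
  define L :: "nat set" where "L = {1,2,3}"
  define par :: "nat \<Rightarrow> nat" where "par = (\<lambda>_. 0)"
  define w :: "nat \<Rightarrow> real" where "w = (\<lambda>i. if i \<in> L then 1/3 else 0)"
  have T: "rooted_tree V 0 par" unfolding rooted_tree_def V_def par_def
    by (auto intro: exI[of _ 1])
  have W: "weighting V w" unfolding weighting_def V_def w_def L_def by simp
  have rp: "root_path V par u = {0,u}" if "u \<in> V" for u
    using that unfolding root_path_def V_def par_def desc0 by auto
  have P: "\<forall>u\<in>V. sum w (root_path V par u) < c"
  proof
    fix u assume u: "u \<in> V"
    show "sum w (root_path V par u) < c"
    proof (cases "u = 0")
      case True then show ?thesis using rp[OF u] c by (simp add: w_def L_def)
    next
      case False then show ?thesis using rp[OF u] c u by (auto simp: w_def L_def V_def)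
    qed
  qed
  have sw: "sum w A = real (card (A \<inter> L)) / 3" if "A \<subseteq> V" for A
  proof -
    have fA: "finite A" using that finite_subset unfolding V_def by blast
    have "sum w A = sum (\<lambda>_. 1/3) (A \<inter> {x. x \<in> L}) + sum (\<lambda>_. 0::real) (A \<inter> - {x. x \<in> L})"
      unfolding w_def by (rule sum.If_cases[OF fA])
    also have "\<dots> = real (card (A \<inter> L)) / 3" by simp
    finally show ?thesis .
  qed
  have U: "min (sum w A) (sum w B) < c"
    if h: "A \<subseteq> V \<and> B \<subseteq> V \<and> unrelated_sets V par A B" for A B
  proof (rule ccontr)
    assume "\<not> min (sum w A) (sum w B) < c"
    then have ge: "sum w A \<ge> c" "sum w B \<ge> c" by auto
    have "real (card (A \<inter> L)) > 1" using ge(1) sw h c by auto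
    then have cA: "card (A \<inter> L) \<ge> 2" by linarith
    have "real (card (B \<inter> L)) > 1" using ge(2) sw h c by auto
    then have cB: "card (B \<inter> L) \<ge> 2" by linarith
    have disj: "(A \<inter> L) \<inter> (B \<inter> L) = {}"
    proof (rule ccontr)
      assume "(A \<inter> L) \<inter> (B \<inter> L) \<noteq> {}"
      then obtain a where a: "a \<in> A" "a \<in> B" by blast
      then have "a \<in> V" using h by blast
      then have "related V par a a" unfolding related_def V_def par_def desc0 by simp
      then show False using h a unfolding unrelated_sets_def by blast
    qed
    have fL: "finite L" unfolding L_def by simp
    have "card ((A \<inter> L) \<union> (B \<inter> L)) = card (A \<inter> L) + card (B \<inter> L)"
      using disj fL by (intro card_Un_disjoint) auto
    moreover have "card ((A \<inter> L) \<union> (B \<inter> L)) \<le> card L"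
      using fL by (intro card_mono) auto
    moreover have "card L = 3" unfolding L_def by simp
    ultimately show False using cA cB by linarith
  qed
  show ?thesis using T W P U by blast
qed

theorem theorem2:
  shows "(\<forall>(V :: 'a set) r par w. rooted_tree V r par \<and> weighting V w \<longrightarrow>
            (\<exists>u\<in>V. sum w (root_path V par u) \<ge> 1/3) \<or>
            (\<exists>A B. A \<subseteq> V \<and> B \<subseteq> V \<and> unrelated_sets V par A B \<and>
                    sum w A \<ge> 1/3 \<and> sum w B \<ge> 1/3))
       \<and> (\<forall>c::real. c > 1/3 \<longrightarrow>
            (\<exists>(V :: nat set) r par w. rooted_tree V r par \<and> weighting V w \<and>
               (\<forall>u\<in>V. sum w (root_path V par u) < c) \<and>
               (\<forall>A B. A \<subseteq> V \<and> B \<subseteq> V \<and> unrelated_sets V par A B \<longrightarrow>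
                      min (sum w A) (sum w B) < c)))"
proof (intro conjI allI impI)
  fix V :: "'a set" and r par w
  assume h: "rooted_tree V r par \<and> weighting V w"
  show "(\<exists>u\<in>V. sum w (root_path V par u) \<ge> 1/3) \<or>
            (\<exists>A B. A \<subseteq> V \<and> B \<subseteq> V \<and> unrelated_sets V par A B \<and>
                    sum w A \<ge> 1/3 \<and> sum w B \<ge> 1/3)"
  proof (cases "\<exists>u\<in>V. sum w (root_path V par u) \<ge> 1/3")
    case False
    then have "\<forall>u\<in>V. sum w (root_path V par u) < 1/3" by auto
    then show ?thesis using part1[of V r par w] h by blast
  qed simp
next
  fix c :: real assume "c > 1/3"
  then show "\<exists>(V :: nat set) r par w. rooted_tree V r par \<and> weighting V w \<and>
               (\<forall>u\<in>V. sum w (root_path V par u) < c) \<and>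
               (\<forall>A B. A \<subseteq> V \<and> B \<subseteq> V \<and> unrelated_sets V par A B \<longrightarrow>
                      min (sum w A) (sum w B) < c)" by (rule part2)
qed

end
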